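(* Let $\Omega\subset\mathbb{C}^n$ be a bounded connected domain and let $B(\Omega)$ be a Banach space of holomorphic functions on $\Omega$ containing all polynomials on $\Omega$, such that for every $z\in\Omega$ the evaluation functional $K_z(f)=f(z)$ is bounded on $B(\Omega)$. Let $\psi\in B(\Omega)$ and let $\varphi=(\varphi_1,\dots,\varphi_n):\Omega\to\Omega$ be a holomorphic self-map such that both the multiplication operator $M_\psi f=\psi f$ and the composition operator $C_\varphi f=f\circ\varphi$ are bounded on $B(\Omega)$. If $M_\psi C_\varphi$ is a Fredholm operator on $B(\Omega)$, then: (i) if $n=1$, $\psi$ has at most finitely many zeros in $\Omega$; (ii) if $n>1$, $\psi$ has no zeros in $\Omega$; (iii) $\varphi$ is univalent (injective) on $\Omega$.
   Context: A Banach space of holomorphic functions on $\Omega$ is a vector space of holomorphic functions on $\Omega$ (pointwise operations) with a complete norm. A bounded operator $T$ is Fredholm if it has closed range, $\dim\ker T<\infty$ and $\dim\ker T^*<\infty$. *)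

theory Defs
  imports "HOL-Analysis.Analysis"
begin

definition hol_on :: "(complex^'n) set \<Rightarrow> (complex^'n \<Rightarrow> complex) \<Rightarrow> bool" where
  "hol_on \<Omega> f \<longleftrightarrow>
     (\<forall>z\<in>\<Omega>. \<exists>L. (f has_derivative L) (at z) \<and> (\<forall>c v. L (c *s v) = c * L v))"

definition hol_self_map :: "(complex^'n) set \<Rightarrow> (complex^'n \<Rightarrow> complex^'n) \<Rightarrow> bool" where
  "hol_self_map \<Omega> \<phi> \<longleftrightarrow> (\<forall>i. hol_on \<Omega> (\<lambda>z. \<phi> z $ i)) \<and> \<phi> ` \<Omega> \<subseteq> \<Omega>"

text \<open>Functions on Omega are represented as functions on the whole space that vanish
  outside Omega.\<close>
definition hol_banach_space ::
  "(complex^'n) set \<Rightarrow> (complex^'n \<Rightarrow> complex) set \<Rightarrow> ((complex^'n \<Rightarrow> complex) \<Rightarrow> real) \<Rightarrow> bool" where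
  "hol_banach_space \<Omega> B N \<longleftrightarrow>
     (\<forall>f\<in>B. hol_on \<Omega> f \<and> (\<forall>z. z \<notin> \<Omega> \<longrightarrow> f z = 0)) \<and>
     (\<lambda>z. 0) \<in> B \<and>
     (\<forall>f\<in>B. \<forall>g\<in>B. (\<lambda>z. f z + g z) \<in> B) \<and>
     (\<forall>c. \<forall>f\<in>B. (\<lambda>z. c * f z) \<in> B) \<and>
     (\<forall>f\<in>B. 0 \<le> N f) \<and>
     (\<forall>f\<in>B. N f = 0 \<longleftrightarrow> f = (\<lambda>z. 0)) \<and>
     (\<forall>c. \<forall>f\<in>B. N (\<lambda>z. c * f z) = cmod c * N f) \<and>
     (\<forall>f\<in>B. \<forall>g\<in>B. N (\<lambda>z. f z + g z) \<le> N f + N g) \<and>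
     (\<forall>u. (\<forall>k. u k \<in> B) \<and>
          (\<forall>e>0. \<exists>K. \<forall>m\<ge>K. \<forall>k\<ge>K. N (\<lambda>z. u m z - u k z) < e) \<longrightarrow>
          (\<exists>g\<in>B. (\<lambda>k. N (\<lambda>z. u k z - g z)) \<longlonglongrightarrow> 0))"

text \<open>B contains all polynomials (restricted to Omega): it contains every monomial,
  hence, being a vector space, every polynomial.\<close>
definition contains_polynomials ::
  "(complex^'n) set \<Rightarrow> (complex^'n \<Rightarrow> complex) set \<Rightarrow> bool" where
  "contains_polynomials \<Omega> B \<longleftrightarrow>
     (\<forall>\<alpha> :: 'n \<Rightarrow> nat. (\<lambda>z. if z \<in> \<Omega> then (\<Prod>i\<in>UNIV. (z $ i) ^ \<alpha> i) else 0) \<in> B)"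

definition bounded_point_evaluations ::
  "(complex^'n) set \<Rightarrow> (complex^'n \<Rightarrow> complex) set \<Rightarrow> ((complex^'n \<Rightarrow> complex) \<Rightarrow> real) \<Rightarrow> bool" where
  "bounded_point_evaluations \<Omega> B N \<longleftrightarrow>
     (\<forall>z\<in>\<Omega>. \<exists>C. \<forall>f\<in>B. cmod (f z) \<le> C * N f)"

definition bounded_op ::
  "(complex^'n \<Rightarrow> complex) set \<Rightarrow> ((complex^'n \<Rightarrow> complex) \<Rightarrow> real)
    \<Rightarrow> ((complex^'n \<Rightarrow> complex) \<Rightarrow> (complex^'n \<Rightarrow> complex)) \<Rightarrow> bool" where
  "bounded_op B N T \<longleftrightarrow>
     (\<forall>f\<in>B. T f \<in> B) \<and>
     (\<forall>f\<in>B. \<forall>g\<in>B. T (\<lambda>z. f z + g z) = (\<lambda>z. T f z + T g z)) \<and>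
     (\<forall>c. \<forall>f\<in>B. T (\<lambda>z. c * f z) = (\<lambda>z. c * T f z)) \<and>
     (\<exists>C. \<forall>f\<in>B. N (T f) \<le> C * N f)"

definition mult_op :: "(complex^'n) set \<Rightarrow> (complex^'n \<Rightarrow> complex)
    \<Rightarrow> (complex^'n \<Rightarrow> complex) \<Rightarrow> (complex^'n \<Rightarrow> complex)" where
  "mult_op \<Omega> \<psi> f = (\<lambda>z. if z \<in> \<Omega> then \<psi> z * f z else 0)"

definition comp_op :: "(complex^'n) set \<Rightarrow> (complex^'n \<Rightarrow> complex^'n)
    \<Rightarrow> (complex^'n \<Rightarrow> complex) \<Rightarrow> (complex^'n \<Rightarrow> complex)" where
  "comp_op \<Omega> \<phi> f = (\<lambda>z. if z \<in> \<Omega> then f (\<phi> z) else 0)"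

definition bounded_functional ::
  "(complex^'n \<Rightarrow> complex) set \<Rightarrow> ((complex^'n \<Rightarrow> complex) \<Rightarrow> real)
    \<Rightarrow> ((complex^'n \<Rightarrow> complex) \<Rightarrow> complex) \<Rightarrow> bool" where
  "bounded_functional B N \<Lambda> \<longleftrightarrow>
     (\<forall>f\<in>B. \<forall>g\<in>B. \<Lambda> (\<lambda>z. f z + g z) = \<Lambda> f + \<Lambda> g) \<and>
     (\<forall>c. \<forall>f\<in>B. \<Lambda> (\<lambda>z. c * f z) = c * \<Lambda> f) \<and>
     (\<exists>C. \<forall>f\<in>B. cmod (\<Lambda> f) \<le> C * N f)"

text \<open>Fredholm: closed range, finite-dimensional kernel, and finite-dimensional kernel of
  the Banach adjoint T* (the functionals Lambda in the dual with Lambda o T = 0);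
  functionals are identified when they agree on B.\<close>
definition fredholm ::
  "(complex^'n \<Rightarrow> complex) set \<Rightarrow> ((complex^'n \<Rightarrow> complex) \<Rightarrow> real)
    \<Rightarrow> ((complex^'n \<Rightarrow> complex) \<Rightarrow> (complex^'n \<Rightarrow> complex)) \<Rightarrow> bool" where
  "fredholm B N T \<longleftrightarrow>
     bounded_op B N T \<and>
     (\<forall>u g. (\<forall>k. u k \<in> T ` B) \<and> g \<in> B \<and> (\<lambda>k. N (\<lambda>z. u k z - g z)) \<longlonglongrightarrow> 0
            \<longrightarrow> g \<in> T ` B) \<and>
     (\<exists>F. finite F \<and> F \<subseteq> {f\<in>B. T f = (\<lambda>z. 0)} \<and>
        (\<forall>g\<in>B. T g = (\<lambda>z. 0) \<longrightarrow> (\<exists>c. g = (\<lambda>z. \<Sum>h\<in>F. c h * h z)))) \<and>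
     (\<exists>F. finite F \<and>
        (\<forall>\<mu>\<in>F. bounded_functional B N \<mu> \<and> (\<forall>f\<in>B. \<mu> (T f) = 0)) \<and>
        (\<forall>\<Lambda>. bounded_functional B N \<Lambda> \<and> (\<forall>f\<in>B. \<Lambda> (T f) = 0) \<longrightarrow>
           (\<exists>c. \<forall>f\<in>B. \<Lambda> f = (\<Sum>\<mu>\<in>F. c \<mu> * \<mu> f))))"

end

theory Submission
  imports Defs "HOL-Complex_Analysis.Complex_Analysis"
begin

lemma col_lemma:
  fixes a :: "'r \<Rightarrow> 'c \<Rightarrow> complex"
  assumes "finite F"
  shows "finite S \<Longrightarrow> card F < card S \<Longrightarrow>
    \<exists>c. (\<exists>k\<in>S. c k \<noteq> 0) \<and> (\<forall>\<mu>\<in>F. (\<Sum>k\<in>S. a \<mu> k * c k) = 0)"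
  using assms
proof (induction F arbitrary: S a rule: finite_induct)
  case empty
  then obtain k where "k \<in> S" by (metis card.empty card_gt_0_iff ex_in_conv)
  then show ?case by (intro exI[of _ "\<lambda>_. 1"]) auto
next
  case (insert \<mu> F)
  show ?case
  proof (cases "\<forall>k\<in>S. a \<mu> k = 0")
    case True
    from insert.IH[OF insert.prems(1), of a] insert.prems insert.hyps
    obtain c where "\<exists>k\<in>S. c k \<noteq> 0" "\<forall>\<mu>\<in>F. (\<Sum>k\<in>S. a \<mu> k * c k) = 0" by auto
    then show ?thesis using True by (intro exI[of _ c]) auto
  next
    case False
    then obtain k0 where k0: "k0 \<in> S" "a \<mu> k0 \<noteq> 0" by auto
    define S' where "S' = S - {k0}"
    define b where "b = (\<lambda>\<nu> k. a \<nu> k - a \<nu> k0 * a \<mu> k / a \<mu> k0)"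
    have fS': "finite S'" using insert.prems S'_def by auto
    have cS': "card F < card S'" using insert.prems insert.hyps k0 S'_def by (simp add: card_Diff_singleton)
    from insert.IH[OF fS' cS', of b]
    obtain c' where c': "\<exists>k\<in>S'. c' k \<noteq> 0" "\<forall>\<nu>\<in>F. (\<Sum>k\<in>S'. b \<nu> k * c' k) = 0" by auto
    define c where "c = (\<lambda>k. if k = k0 then - (\<Sum>k\<in>S'. a \<mu> k * c' k) / a \<mu> k0 else c' k)"
    have split: "(\<Sum>k\<in>S. a \<nu> k * c k) = a \<nu> k0 * c k0 + (\<Sum>k\<in>S'. a \<nu> k * c' k)" for \<nu>
    proof -
      have "(\<Sum>k\<in>S. a \<nu> k * c k) = a \<nu> k0 * c k0 + (\<Sum>k\<in>S'. a \<nu> k * c k)"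
        using k0 insert.prems S'_def by (simp add: sum.remove)
      moreover have "(\<Sum>k\<in>S'. a \<nu> k * c k) = (\<Sum>k\<in>S'. a \<nu> k * c' k)"
        by (rule sum.cong) (auto simp: c_def S'_def)
      ultimately show ?thesis by simp
    qed
    show ?thesis
    proof (intro exI[of _ c] conjI ballI)
      show "\<exists>k\<in>S. c k \<noteq> 0" using c'(1) by (auto simp: c_def S'_def)
    next
      fix \<nu> assume "\<nu> \<in> insert \<mu> F"
      then consider "\<nu> = \<mu>" | "\<nu> \<in> F" by auto
      then show "(\<Sum>k\<in>S. a \<nu> k * c k) = 0"
      proof cases
        case 1
        have "a \<mu> k0 * c k0 + (\<Sum>k\<in>S'. a \<mu> k * c' k) = 0" using k0 by (simp add: c_def)
        then show ?thesis using 1 split[of \<mu>] by simp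
      next
        case 2
        have "(\<Sum>k\<in>S'. b \<nu> k * c' k) = (\<Sum>k\<in>S'. a \<nu> k * c' k) - a \<nu> k0 / a \<mu> k0 * (\<Sum>k\<in>S'. a \<mu> k * c' k)"
          unfolding b_def by (simp add: algebra_simps sum_subtractf sum_distrib_left)
        with c'(2) 2 have "(\<Sum>k\<in>S'. a \<nu> k * c' k) = a \<nu> k0 / a \<mu> k0 * (\<Sum>k\<in>S'. a \<mu> k * c' k)" by auto
        then have "a \<nu> k0 * c k0 + (\<Sum>k\<in>S'. a \<nu> k * c' k) = 0" using k0 by (simp add: c_def field_simps)
        then show ?thesis using split[of \<nu>] by simp
      qed
    qed
  qed
qed

definition monofn :: "('n \<Rightarrow> nat) \<Rightarrow> complex^'n \<Rightarrow> complex" where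
  "monofn \<alpha> z = (\<Prod>i\<in>UNIV. (z $ i) ^ \<alpha> i)"

definition restr :: "(complex^'n) set \<Rightarrow> (complex^'n \<Rightarrow> complex) \<Rightarrow> complex^'n \<Rightarrow> complex" where
  "restr \<Omega> g = (\<lambda>z. if z \<in> \<Omega> then g z else 0)"

lemma mono_upd: "monofn (\<alpha>(i := Suc (\<alpha> i))) z = z $ i * monofn \<alpha> z"
proof -
  have "monofn (\<alpha>(i := Suc (\<alpha> i))) z = (z $ i) ^ Suc (\<alpha> i) * (\<Prod>j\<in>UNIV - {i}. (z $ j) ^ \<alpha> j)"
    unfolding monofn_def by (subst prod.remove[of _ i]) auto
  also have "\<dots> = z $ i * ((z $ i) ^ \<alpha> i * (\<Prod>j\<in>UNIV - {i}. (z $ j) ^ \<alpha> j))" by simp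
  also have "(z $ i) ^ \<alpha> i * (\<Prod>j\<in>UNIV - {i}. (z $ j) ^ \<alpha> j) = monofn \<alpha> z"
    unfolding monofn_def by (subst (2) prod.remove[of _ i]) auto
  finally show ?thesis .
qed

lemma mono_0: "monofn (\<lambda>_. 0) z = 1" by (simp add: monofn_def)

lemma hbs_facts:
  assumes "hol_banach_space \<Omega> B N"
  shows "(\<lambda>z. 0) \<in> B" "\<And>f g. f \<in> B \<Longrightarrow> g \<in> B \<Longrightarrow> (\<lambda>z. f z + g z) \<in> B"
    "\<And>c f. f \<in> B \<Longrightarrow> (\<lambda>z. c * f z) \<in> B"
    "\<And>f z. f \<in> B \<Longrightarrow> z \<notin> \<Omega> \<Longrightarrow> f z = 0"
    "\<And>f. f \<in> B \<Longrightarrow> hol_on \<Omega> f"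
  using assms unfolding hol_banach_space_def by blast+

lemma poly_prod_in_B:
  assumes hbs: "hol_banach_space \<Omega> B N" and cp: "contains_polynomials \<Omega> B" and "finite S"
  shows "\<forall>\<alpha>. restr \<Omega> (\<lambda>z. (\<Prod>p\<in>S. (z $ ix p - p $ ix p)) * monofn \<alpha> z) \<in> B"
  using \<open>finite S\<close>
proof (induction S rule: finite_induct)
  case empty
  show ?case using cp by (simp add: contains_polynomials_def restr_def monofn_def)
next
  case (insert p S)
  show ?case
  proof
    fix \<alpha> :: "'a \<Rightarrow> nat"
    define i where "i = ix p"
    define P where "P = (\<lambda>z. \<Prod>p\<in>S. (z $ ix p - p $ ix p))"
    define \<alpha>' where "\<alpha>' = \<alpha>(i := Suc (\<alpha> i))"
    have h1: "restr \<Omega> (\<lambda>z. P z * monofn \<alpha>' z) \<in> B" using insert.IH unfolding P_def by blast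
    have h2: "(\<lambda>z. (- (p $ i)) * restr \<Omega> (\<lambda>z. P z * monofn \<alpha> z) z) \<in> B"
      using insert.IH hbs_facts(3)[OF hbs] unfolding P_def by blast
    have eq: "restr \<Omega> (\<lambda>z. (\<Prod>p\<in>insert p S. (z $ ix p - p $ ix p)) * monofn \<alpha> z)
      = (\<lambda>z. restr \<Omega> (\<lambda>z. P z * monofn \<alpha>' z) z + (- (p $ i)) * restr \<Omega> (\<lambda>z. P z * monofn \<alpha> z) z)"
      using insert.hyps unfolding restr_def P_def \<alpha>'_def i_def
      by (auto simp: mono_upd algebra_simps)
    show "restr \<Omega> (\<lambda>z. (\<Prod>p\<in>insert p S. (z $ ix p - p $ ix p)) * monofn \<alpha> z) \<in> B"
      unfolding eq by (rule hbs_facts(2)[OF hbs h1 h2])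
  qed
qed

lemma interp:
  assumes hbs: "hol_banach_space \<Omega> B N" and cp: "contains_polynomials \<Omega> B"
    and "finite S" "x \<notin> S" "x \<in> \<Omega>"
  shows "\<exists>q\<in>B. q x = 1 \<and> (\<forall>p\<in>S. q p = 0)"
proof -
  define ix where "ix = (\<lambda>p. SOME i. x $ i \<noteq> p $ i)"
  have ix: "x $ ix p \<noteq> p $ ix p" if "p \<in> S" for p
  proof -
    have "x \<noteq> p" using that assms by auto
    then have "\<exists>i. x $ i \<noteq> p $ i" by (simp add: vec_eq_iff)
    then show ?thesis unfolding ix_def by (rule someI_ex)
  qed
  define P where "P = (\<lambda>z. \<Prod>p\<in>S. (z $ ix p - p $ ix p))"
  have Px: "P x \<noteq> 0" unfolding P_def using ix \<open>finite S\<close> by auto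
  have Pp: "P p = 0" if "p \<in> S" for p unfolding P_def using that \<open>finite S\<close>
    by (auto intro: bexI[of _ p])
  have inB: "restr \<Omega> (\<lambda>z. P z * monofn (\<lambda>_. 0) z) \<in> B"
    using poly_prod_in_B[OF hbs cp \<open>finite S\<close>, of ix] unfolding P_def by blast
  define q where "q = (\<lambda>z. (1 / P x) * restr \<Omega> (\<lambda>z. P z * monofn (\<lambda>_. 0) z) z)"
  have "q \<in> B" unfolding q_def by (rule hbs_facts(3)[OF hbs inB])
  moreover have "q x = 1" using Px \<open>x \<in> \<Omega>\<close> by (simp add: q_def restr_def mono_0)
  moreover have "\<forall>p\<in>S. q p = 0" using Pp by (simp add: q_def restr_def)
  ultimately show ?thesis by blast
qed

lemma bf_add: "bounded_functional B N \<Lambda> \<Longrightarrow> f \<in> B \<Longrightarrow> g \<in> B \<Longrightarrow> \<Lambda> (\<lambda>z. f z + g z) = \<Lambda> f + \<Lambda> g"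
  unfolding bounded_functional_def by blast
lemma bf_scale: "bounded_functional B N \<Lambda> \<Longrightarrow> f \<in> B \<Longrightarrow> \<Lambda> (\<lambda>z. c * f z) = c * \<Lambda> f"
  unfolding bounded_functional_def by blast

lemma bf_sum:
  assumes hbs: "hol_banach_space \<Omega> B N" and bf: "bounded_functional B N \<Lambda>"
    and "finite S" and q: "\<forall>k\<in>S. q k \<in> B"
  shows "(\<lambda>z. \<Sum>k\<in>S. c k * q k z) \<in> B \<and> \<Lambda> (\<lambda>z. \<Sum>k\<in>S. c k * q k z) = (\<Sum>k\<in>S. c k * \<Lambda> (q k))"
  using \<open>finite S\<close> q
proof (induction S rule: finite_induct)
  case empty
  have z: "(\<lambda>z. 0) \<in> B" by (rule hbs_facts(1)[OF hbs])
  have "\<forall>c. \<forall>f\<in>B. \<Lambda> (\<lambda>z. c * f z) = c * \<Lambda> f" using bf unfolding bounded_functional_def by blast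
  then have "\<forall>f\<in>B. \<Lambda> (\<lambda>z. 0 * f z) = 0 * \<Lambda> f" by blast
  from bspec[OF this z] have "\<Lambda> (\<lambda>z. 0) = 0" by simp
  then show ?case using z by simp
next
  case (insert k S)
  then have IH: "(\<lambda>z. \<Sum>k\<in>S. c k * q k z) \<in> B" "\<Lambda> (\<lambda>z. \<Sum>k\<in>S. c k * q k z) = (\<Sum>k\<in>S. c k * \<Lambda> (q k))"
    and qk: "q k \<in> B" by auto
  have s1: "(\<lambda>z. c k * q k z) \<in> B" using hbs_facts(3)[OF hbs qk] .
  have eq: "(\<lambda>z. \<Sum>k\<in>insert k S. c k * q k z) = (\<lambda>z. (\<lambda>z. c k * q k z) z + (\<lambda>z. \<Sum>k\<in>S. c k * q k z) z)"
    using insert.hyps by simp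
  have "\<Lambda> (\<lambda>z. (\<lambda>z. c k * q k z) z + (\<lambda>z. \<Sum>k\<in>S. c k * q k z) z) = \<Lambda> (\<lambda>z. c k * q k z) + \<Lambda> (\<lambda>z. \<Sum>k\<in>S. c k * q k z)"
    by (rule bf_add[OF bf s1 IH(1)])
  moreover have "\<Lambda> (\<lambda>z. c k * q k z) = c k * \<Lambda> (q k)" by (rule bf_scale[OF bf qk])
  ultimately show ?case using insert.hyps IH eq hbs_facts(2)[OF hbs s1 IH(1)] by simp
qed

lemma eval2_bf:
  assumes bpe: "bounded_point_evaluations \<Omega> B N" and hbs: "hol_banach_space \<Omega> B N"
    and "x \<in> \<Omega>" "y \<in> \<Omega>"
  shows "bounded_functional B N (\<lambda>f. a * f x - b * f y)"
proof -
  obtain C1 where C1: "\<forall>f\<in>B. cmod (f x) \<le> C1 * N f" using bpe \<open>x \<in> \<Omega>\<close> unfolding bounded_point_evaluations_def by blast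
  obtain C2 where C2: "\<forall>f\<in>B. cmod (f y) \<le> C2 * N f" using bpe \<open>y \<in> \<Omega>\<close> unfolding bounded_point_evaluations_def by blast
  have "cmod (a * f x - b * f y) \<le> (cmod a * C1 + cmod b * C2) * N f" if "f \<in> B" for f
  proof -
    have "cmod (a * f x - b * f y) \<le> cmod a * cmod (f x) + cmod b * cmod (f y)"
      by (metis norm_mult norm_triangle_ineq4)
    also have "\<dots> \<le> cmod a * (C1 * N f) + cmod b * (C2 * N f)"
      using C1 C2 that by (intro add_mono mult_left_mono) auto
    finally show ?thesis by (simp add: algebra_simps)
  qed
  then have "\<exists>C. \<forall>f\<in>B. cmod (a * f x - b * f y) \<le> C * N f" by blast
  then show ?thesis unfolding bounded_functional_def by (auto simp: algebra_simps)
qed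

lemma zero_bf: "bounded_functional B N (\<lambda>f. 0)"
  unfolding bounded_functional_def by (auto intro: exI[of _ 0])

lemma lemmaB:
  assumes hbs: "hol_banach_space \<Omega> B N" and cp: "contains_polynomials \<Omega> B"
    and bpe: "bounded_point_evaluations \<Omega> B N" and fr: "fredholm B N T"
    and X: "X \<subseteq> \<Omega>" "infinite X"
    and y: "\<forall>x\<in>X. y x \<in> \<Omega>"
    and al: "\<forall>x\<in>X. \<alpha> x \<noteq> 0"
    and yX: "\<forall>x\<in>X. \<beta> x = 0 \<or> y x \<notin> X"
    and ker: "\<forall>x\<in>X. \<forall>f\<in>B. \<alpha> x * T f x = \<beta> x * T f (y x)"
  shows False
proof -
  have "\<exists>F. finite F \<and>
        (\<forall>\<mu>\<in>F. bounded_functional B N \<mu> \<and> (\<forall>f\<in>B. \<mu> (T f) = 0)) \<and>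
        (\<forall>\<Lambda>. bounded_functional B N \<Lambda> \<and> (\<forall>f\<in>B. \<Lambda> (T f) = 0) \<longrightarrow>
           (\<exists>c. \<forall>f\<in>B. \<Lambda> f = (\<Sum>\<mu>\<in>F. c \<mu> * \<mu> f)))"
    using fr unfolding fredholm_def by (elim conjE) assumption
  then obtain F where F: "finite F" "\<forall>\<mu>\<in>F. bounded_functional B N \<mu> \<and> (\<forall>f\<in>B. \<mu> (T f) = 0)"
    "\<forall>\<Lambda>. bounded_functional B N \<Lambda> \<and> (\<forall>f\<in>B. \<Lambda> (T f) = 0) \<longrightarrow>
           (\<exists>c. \<forall>f\<in>B. \<Lambda> f = (\<Sum>\<mu>\<in>F. c \<mu> * \<mu> f))"
    by (elim exE conjE)
  obtain X0 where X0: "X0 \<subseteq> X" "finite X0" "card X0 = Suc (card F)"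
    using infinite_arbitrarily_large[OF X(2)] by blast
  define S where "S = (\<lambda>x. (X0 - {x}) \<union> (y ` X0 - X))"
  have "\<exists>q\<in>B. q x = 1 \<and> (\<forall>p\<in>S x. q p = 0)" if "x \<in> X0" for x
  proof -
    have xX: "x \<in> X" "x \<in> \<Omega>" using that X0 X by auto
    have "finite (S x)" using X0 by (simp add: S_def)
    moreover have "x \<notin> S x" using xX by (simp add: S_def)
    ultimately show ?thesis using interp[OF hbs cp _ _ xX(2)] by blast
  qed
  then have "\<forall>x\<in>X0. \<exists>q. q \<in> B \<and> q x = 1 \<and> (\<forall>p\<in>S x. q p = 0)" by blast
  from bchoice[OF this] obtain q where q0: "\<forall>x\<in>X0. q x \<in> B \<and> q x x = 1 \<and> (\<forall>p\<in>S x. q x p = 0)"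
    by blast
  then have q: "\<And>x. x \<in> X0 \<Longrightarrow> q x \<in> B \<and> q x x = 1 \<and> (\<forall>p\<in>S x. q x p = 0)" by blast
  obtain c where c: "\<exists>k\<in>X0. c k \<noteq> 0" "\<forall>\<mu>\<in>F. (\<Sum>k\<in>X0. \<mu> (q k) * c k) = 0"
    using col_lemma[OF F(1) X0(2), of "\<lambda>\<mu> k. \<mu> (q k)"] X0(3) by auto
  define g where "g = (\<lambda>z. \<Sum>k\<in>X0. c k * q k z)"
  have gB: "g \<in> B" using bf_sum[OF hbs zero_bf X0(2), of q c] q
    unfolding g_def by auto
  have muF: "\<mu> g = 0" if "\<mu> \<in> F" for \<mu>
  proof -
    have "\<mu> g = (\<Sum>k\<in>X0. c k * \<mu> (q k))"
      using bf_sum[OF hbs _ X0(2), of \<mu> q c] q F(2) that unfolding g_def by auto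
    also have "\<dots> = 0" using c(2) that by (simp add: mult.commute)
    finally show ?thesis .
  qed
  have "c x = 0" if x: "x \<in> X0" for x
  proof -
    have xO: "x \<in> \<Omega>" "y x \<in> \<Omega>" using x X0 X y by auto
    define \<Lambda> where "\<Lambda> = (\<lambda>f. \<alpha> x * f x - \<beta> x * f (y x))"
    have bf: "bounded_functional B N \<Lambda>" unfolding \<Lambda>_def by (rule eval2_bf[OF bpe hbs xO])
    have kL: "\<forall>f\<in>B. \<Lambda> (T f) = 0" using ker x X0 unfolding \<Lambda>_def by auto
    obtain d where d: "\<forall>f\<in>B. \<Lambda> f = (\<Sum>\<mu>\<in>F. d \<mu> * \<mu> f)"
      using mp[OF spec[OF F(3), of \<Lambda>] conjI[OF bf kL]] by blast
    have "\<Lambda> g = 0" using d gB muF by (simp add: sum.neutral)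
    moreover have "g x = c x"
    proof -
      have "g x = (\<Sum>k\<in>X0. if k = x then c k else 0)"
        unfolding g_def
      proof (rule sum.cong)
        fix k assume k: "k \<in> X0"
        show "c k * q k x = (if k = x then c k else 0)"
        proof (cases "k = x")
          case False then have "x \<in> S k" using x unfolding S_def by auto
          then show ?thesis using q[OF k] False by simp
        qed (use q[OF k] in simp)
      qed simp
      then show ?thesis using x X0 by simp
    qed
    moreover have "\<beta> x * g (y x) = 0"
    proof (cases "\<beta> x = 0")
      case False
      then have "y x \<notin> X" using yX x X0 by auto
      then have "y x \<in> S k" if "k \<in> X0" for k using x unfolding S_def by auto
      then have "g (y x) = 0" unfolding g_def using q by (auto intro!: sum.neutral)
      then show ?thesis by simp
    qed simp
    ultimately have "\<alpha> x * c x = 0" unfolding \<Lambda>_def by simp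
    then show ?thesis using al x X0 by auto
  qed
  then show False using c(1) by auto
qed


lemma axis_comp: "axis i x $ j = (if j = i then x else 0)"
  by (simp add: axis_def)

lemma axis_zero [simp]: "axis i 0 = (0::complex^'n)"
  by (simp add: vec_eq_iff axis_def)

lemma norm_axis_eq: "norm (axis i (x::complex) :: complex^'n) = norm x"
proof -
  have "norm (axis i x :: complex^'n) ^ 2 = norm x ^ 2"
    by (simp add: power2_norm_eq_inner inner_axis_axis)
  then show ?thesis by (simp add: power2_eq_iff_nonneg)
qed

lemma bl_axis: "bounded_linear (axis i :: complex \<Rightarrow> complex^'n)"
proof (rule bounded_linear_intro[where K=1])
  show "axis i (x + y) = (axis i x + axis i y :: complex^'n)" for x y :: complex by (simp add: vec_eq_iff axis_def)
  show "axis i (r *\<^sub>R x) = (r *\<^sub>R axis i x :: complex^'n)" for r and x :: complex by (simp add: vec_eq_iff axis_def)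
  show "norm (axis i x :: complex^'n) \<le> norm x * 1" for x :: complex by (simp add: norm_axis_eq)
qed

lemma hol_cont: "hol_on \<Omega> f \<Longrightarrow> continuous_on \<Omega> f"
  unfolding hol_on_def
  by (meson continuous_at_imp_continuous_on has_derivative_continuous)

lemma slice_hol:
  fixes f :: "complex^'n \<Rightarrow> complex"
  assumes "hol_on \<Omega> f"
  shows "(\<lambda>s. f (p + axis i s)) holomorphic_on {s. p + axis i s \<in> \<Omega>}"
  unfolding holomorphic_on_def
proof
  fix s assume "s \<in> {s. p + axis i s \<in> \<Omega>}"
  then obtain L where L: "(f has_derivative L) (at (p + axis i s))" "\<forall>c v. L (c *s v) = c * L v"
    using assms unfolding hol_on_def by auto
  have d1: "((\<lambda>s. p + axis i s) has_derivative axis i) (at s)"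
    using has_derivative_add[OF has_derivative_const bounded_linear_imp_has_derivative[OF bl_axis]]
    by simp
  have "((\<lambda>s. f (p + axis i s)) has_derivative (L \<circ> axis i)) (at s)"
    using diff_chain_at[OF d1 L(1)] by (simp add: o_def)
  moreover have "L \<circ> axis i = (*) (L (axis i 1))"
  proof
    fix h
    have "axis i h = h *s (axis i 1 :: complex^'n)" by (simp add: vec_eq_iff axis_def)
    then show "(L \<circ> axis i) h = L (axis i 1) * h" using L(2) by (simp add: mult.commute)
  qed
  ultimately have "((\<lambda>s. f (p + axis i s)) has_field_derivative L (axis i 1)) (at s)"
    by (simp add: has_field_derivative_def)
  then show "(\<lambda>s. f (p + axis i s)) field_differentiable at s within {s. p + axis i s \<in> \<Omega>}"
    using field_differentiable_at_within field_differentiable_def by blast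
qed

lemma no_isolated_zero:
  fixes \<psi> :: "complex^'n \<Rightarrow> complex"
  assumes card: "CARD('n) > 1" and op: "open \<Omega>" and hol: "hol_on \<Omega> \<psi>"
    and z0: "z0 \<in> \<Omega>" "\<psi> z0 = 0"
  shows "infinite {z\<in>\<Omega>. \<psi> z = 0}"
proof -
  obtain i1 :: 'n where True by blast
  have "UNIV - {i1} \<noteq> {}"
  proof
    assume "UNIV - {i1} = {}"
    then have "(UNIV::'n set) = {i1}" by auto
    then have "card (UNIV::'n set) = card {i1}" by (rule arg_cong)
    then show False using card by simp
  qed
  then obtain i2 where "i2 \<in> UNIV - {i1}" by (meson ex_in_conv)
  then have i12: "i1 \<noteq> i2" by simp
  obtain \<rho> where \<rho>: "\<rho> > 0" "cball z0 \<rho> \<subseteq> \<Omega>" using op z0 open_contains_cball by blast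
  define E where "E = (\<lambda>s t. z0 + axis i1 s + axis i2 t :: complex^'n)"
  define G where "G = (\<lambda>s t. \<psi> (E s t))"
  define K where "K = cball (0::complex) (\<rho>/2) \<times> cball (0::complex) (\<rho>/2)"
  have inO: "E s t \<in> \<Omega>" if "cmod s \<le> \<rho>/2" "cmod t \<le> \<rho>/2" for s t
  proof -
    have "dist z0 (E s t) = norm (axis i1 s + axis i2 t :: complex^'n)"
      by (metis E_def add_diff_cancel_left' add.assoc dist_commute dist_norm)
    also have "\<dots> \<le> norm (axis i1 s :: complex^'n) + norm (axis i2 t :: complex^'n)" by (rule norm_triangle_ineq)
    also have "\<dots> \<le> \<rho>" using that by (simp add: norm_axis_eq)
    finally show ?thesis using \<rho> by auto
  qed
  have contpsi: "continuous_on \<Omega> \<psi>" by (rule hol_cont[OF hol])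
  have contE: "continuous_on UNIV (\<lambda>x. E (fst x) (snd x))"
  proof -
    have "bounded_linear (\<lambda>x::complex\<times>complex. axis i1 (fst x) + axis i2 (snd x) :: complex^'n)"
      by (intro bounded_linear_add bounded_linear_compose[OF bl_axis] bounded_linear_fst bounded_linear_snd)
    then have "continuous_on UNIV (\<lambda>x::complex\<times>complex. axis i1 (fst x) + axis i2 (snd x) :: complex^'n)"
      by (rule linear_continuous_on)
    then show ?thesis unfolding E_def
      by (simp add: add.assoc continuous_on_add continuous_on_const)
  qed
  have contG: "continuous_on K (\<lambda>x. G (fst x) (snd x))"
    unfolding G_def
    by (rule continuous_on_compose2[OF contpsi continuous_on_subset[OF contE]])
       (auto simp: K_def inO)
  have contG1: "continuous_on (cball 0 (\<rho>/2)) (\<lambda>s. G s t)" if "cmod t \<le> \<rho>/2" for t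
    by (rule continuous_on_compose2[OF contG, of _ "\<lambda>s. (s, t)", simplified])
       (use that in \<open>auto intro!: continuous_intros simp: K_def\<close>)
  have G00: "G 0 0 = 0" using z0 by (simp add: G_def E_def)
  show ?thesis
  proof (cases "finite {s \<in> cball 0 (\<rho>/2). G s 0 = 0}")
    case False
    have "inj_on (\<lambda>s. E s 0) {s \<in> cball 0 (\<rho>/2). G s 0 = 0}"
    proof (rule inj_onI)
      fix s s' assume "E s 0 = E s' 0"
      then have "E s 0 $ i1 = E s' 0 $ i1" by simp
      then show "s = s'" by (simp add: E_def axis_comp)
    qed
    then have "infinite ((\<lambda>s. E s 0) ` {s \<in> cball 0 (\<rho>/2). G s 0 = 0})"
      using False finite_imageD by blast
    moreover have "(\<lambda>s. E s 0) ` {s \<in> cball 0 (\<rho>/2). G s 0 = 0} \<subseteq> {z\<in>\<Omega>. \<psi> z = 0}"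
      using inO \<rho> by (auto simp: G_def)
    ultimately show ?thesis using infinite_super by blast
  next
    case True
    define Z0 where "Z0 = {s \<in> cball 0 (\<rho>/2). G s 0 = 0}"
    define r where "r = Min (insert (\<rho>/2) ((\<lambda>s. cmod s / 2) ` (Z0 - {0})))"
    have fZ: "finite (insert (\<rho>/2) ((\<lambda>s. cmod s / 2) ` (Z0 - {0})))" using True Z0_def by simp
    have r_pos: "r > 0" unfolding r_def using fZ \<rho> by (subst Min_gr_iff) auto
    have r_le: "r \<le> \<rho>/2" unfolding r_def using fZ by (intro Min_le) auto
    have r_le2: "r \<le> cmod s / 2" if "s \<in> Z0" "s \<noteq> 0" for s
      unfolding r_def using fZ that by (intro Min_le) auto
    have hr: "G s 0 \<noteq> 0" if "cmod s = r" for s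
    proof
      assume "G s 0 = 0"
      then have "s \<in> Z0" using that r_le by (simp add: Z0_def)
      moreover have "s \<noteq> 0" using that r_pos by auto
      ultimately have "r \<le> cmod s / 2" by (rule r_le2)
      then show False using that r_pos by simp
    qed
    have sph: "sphere (0::complex) r \<noteq> {}" using r_pos
      by (metis dist_0_norm mem_sphere norm_of_real abs_of_pos empty_iff)
    have "continuous_on (sphere 0 r) (\<lambda>s. cmod (G s 0))"
      by (intro continuous_on_norm continuous_on_subset[OF contG1]) (use \<rho> r_le in auto)
    then obtain sm where sm: "sm \<in> sphere 0 r" "\<forall>s\<in>sphere 0 r. cmod (G sm 0) \<le> cmod (G s 0)"
      using continuous_attains_inf[OF compact_sphere sph] by blast
    define m where "m = cmod (G sm 0)"
    have m_pos: "m > 0" using hr sm(1) by (simp add: m_def)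
    have "uniformly_continuous_on K (\<lambda>x. G (fst x) (snd x))"
      by (rule compact_uniformly_continuous[OF contG]) (simp add: K_def compact_Times)
    then obtain \<delta> where \<delta>: "\<delta> > 0" "\<forall>x\<in>K. \<forall>x'\<in>K. dist x' x < \<delta> \<longrightarrow>
        dist (G (fst x') (snd x')) (G (fst x) (snd x)) < m/2"
      unfolding uniformly_continuous_on_def using m_pos by (meson half_gt_zero)
    define T0 where "T0 = ball (0::complex) (min \<delta> (\<rho>/2)) - {0}"
    have ex: "\<exists>s. cmod s \<le> r \<and> G s t = 0" if t: "t \<in> T0" for t
    proof (rule ccontr)
      assume nz: "\<not> (\<exists>s. cmod s \<le> r \<and> G s t = 0)"
      have t1: "cmod t < \<delta>" "cmod t \<le> \<rho>/2" using t by (auto simp: T0_def)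
      have close: "cmod (G s t - G s 0) < m/2" if "cmod s \<le> r" for s
      proof -
        have "(s, t) \<in> K" "(s, 0) \<in> K" using that r_le t1 \<rho>(1) by (auto simp: K_def)
        moreover have "dist (s, t) (s, 0) < \<delta>" using t1 by (simp add: dist_Pair_Pair)
        ultimately have "dist (G (fst (s,t)) (snd (s,t))) (G (fst (s,0)) (snd (s,0))) < m/2"
          using \<delta>(2)[rule_format, of "(s,0)" "(s,t)"] by simp
        then show ?thesis by (simp add: dist_norm)
      qed
      define f where "f = (\<lambda>s. inverse (G s t))"
      have holG: "(\<lambda>s. G s t) holomorphic_on {s. (z0 + axis i2 t) + axis i1 s \<in> \<Omega>}"
        using slice_hol[OF hol, of "z0 + axis i2 t" i1] unfolding G_def E_def
        by (simp add: add_ac)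
      have sub: "cball 0 r \<subseteq> {s. (z0 + axis i2 t) + axis i1 s \<in> \<Omega>}"
      proof
        fix s assume "s \<in> cball (0::complex) r"
        then have "cmod s \<le> \<rho>/2" using r_le by simp
        then have "E s t \<in> \<Omega>" using inO t1 by blast
        moreover have "(z0 + axis i2 t) + axis i1 s = E s t" by (simp add: E_def add_ac)
        ultimately show "s \<in> {s. (z0 + axis i2 t) + axis i1 s \<in> \<Omega>}" by simp
      qed
      have nz': "\<And>s. cmod s \<le> r \<Longrightarrow> G s t \<noteq> 0" using nz by blast
      have h1: "(\<lambda>s. G s t) holomorphic_on ball 0 r"
        by (rule holomorphic_on_subset[OF holG]) (use sub ball_subset_cball in blast)
      have h2: "(\<lambda>s. inverse (G s t)) holomorphic_on ball 0 r"
        by (rule holomorphic_on_inverse[OF h1]) (simp add: nz')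
      have holf: "f holomorphic_on interior (cball 0 r)"
        using h2 by (simp add: f_def)
      have c1: "continuous_on (cball 0 r) (\<lambda>s. G s t)"
        by (rule continuous_on_subset[OF contG1[OF t1(2)]]) (use r_le in auto)
      have c2: "continuous_on (cball 0 r) (\<lambda>s. inverse (G s t))"
        by (rule continuous_on_inverse[OF c1]) (simp add: nz')
      have contf: "continuous_on (closure (cball 0 r)) f"
        using c2 by (simp add: f_def)
      have fb: "cmod (f s) \<le> 2/m" if "s \<in> frontier (cball 0 r)" for s
      proof -
        have s: "cmod s = r" using that r_pos by (simp add: frontier_cball)
        have "m \<le> cmod (G s 0)" using sm(2) s by (simp add: m_def)
        moreover have "cmod (G s t - G s 0) < m/2" using close s by simp
        ultimately have "m/2 \<le> cmod (G s t)" using norm_triangle_ineq2[of "G s 0" "G s t"] norm_minus_commute[of "G s 0" "G s t"] by linarith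
        then have "inverse (cmod (G s t)) \<le> inverse (m/2)" using m_pos by (intro le_imp_inverse_le) auto
        then show ?thesis by (simp add: f_def norm_inverse)
      qed
      have "cmod (f 0) \<le> 2/m"
        using maximum_modulus_frontier[OF holf contf bounded_cball fb, of 0] r_pos by simp
      moreover have "G 0 t \<noteq> 0" using nz r_pos by auto
      ultimately have "inverse (cmod (G 0 t)) \<le> inverse (m/2)" "0 < cmod (G 0 t)"
        by (simp_all add: f_def norm_inverse)
      then have "m/2 \<le> cmod (G 0 t)" by (rule inverse_le_imp_le)
      moreover have "cmod (G 0 t - G 0 0) < m/2" using close r_pos by simp
      ultimately show False using G00 by simp
    qed
    then have "\<forall>t\<in>T0. \<exists>s. cmod s \<le> r \<and> G s t = 0" by blast
    from bchoice[OF this] obtain st where st0: "\<forall>t\<in>T0. cmod (st t) \<le> r \<and> G (st t) t = 0" by blast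
    then have st: "\<And>t. t \<in> T0 \<Longrightarrow> cmod (st t) \<le> r \<and> G (st t) t = 0" by blast
    define g where "g = (\<lambda>t. E (st t) t)"
    have "inj_on g T0"
    proof (rule inj_onI)
      fix t t' assume "g t = g t'"
      then have "g t $ i2 = g t' $ i2" by simp
      then show "t = t'" using i12 by (simp add: g_def E_def axis_comp)
    qed
    moreover have "infinite T0"
    proof
      assume "finite T0"
      then have "finite (insert 0 T0)" by simp
      then have "finite (ball (0::complex) (min \<delta> (\<rho>/2)))" unfolding T0_def
        by (rule finite_subset[rotated]) auto
      then have "ball (0::complex) (min \<delta> (\<rho>/2)) = {}" using finite_imp_not_open by blast
      then show False using \<delta> \<rho> by simp
    qed
    ultimately have "infinite (g ` T0)" using finite_imageD by blast
    moreover have "g ` T0 \<subseteq> {z\<in>\<Omega>. \<psi> z = 0}"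
    proof
      fix z assume "z \<in> g ` T0"
      then obtain t where t: "t \<in> T0" "z = g t" by blast
      have "cmod t \<le> \<rho>/2" using t by (auto simp: T0_def)
      then show "z \<in> {z\<in>\<Omega>. \<psi> z = 0}" using st[OF t(1)] r_le inO t
        by (auto simp: g_def G_def)
    qed
    ultimately show ?thesis using infinite_super by blast
  qed
qed


lemma zeros_finite:
  assumes hbs: "hol_banach_space \<Omega> B N" and cp: "contains_polynomials \<Omega> B"
    and bpe: "bounded_point_evaluations \<Omega> B N"
    and fr: "fredholm B N (\<lambda>f. mult_op \<Omega> \<psi> (comp_op \<Omega> \<phi> f))"
  shows "finite {z\<in>\<Omega>. \<psi> z = 0}"
proof (rule ccontr)
  assume inf: "infinite {z\<in>\<Omega>. \<psi> z = 0}"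
  show False
    by (rule lemmaB[OF hbs cp bpe fr, of "{z\<in>\<Omega>. \<psi> z = 0}" "\<lambda>x. x" "\<lambda>_. 1" "\<lambda>_. 0"])
       (use inf in \<open>auto simp: mult_op_def\<close>)
qed

lemma fiber_finite:
  assumes hbs: "hol_banach_space \<Omega> B N" and cp: "contains_polynomials \<Omega> B"
    and bpe: "bounded_point_evaluations \<Omega> B N"
    and fr: "fredholm B N (\<lambda>f. mult_op \<Omega> \<psi> (comp_op \<Omega> \<phi> f))"
  shows "finite {x\<in>\<Omega>. \<phi> x = w}"
proof (rule ccontr)
  assume inf: "infinite {x\<in>\<Omega>. \<phi> x = w}"
  have zf: "finite {z\<in>\<Omega>. \<psi> z = 0}" by (rule zeros_finite[OF hbs cp bpe fr])
  have "infinite ({x\<in>\<Omega>. \<phi> x = w} - {z\<in>\<Omega>. \<psi> z = 0})" using zf inf by (rule Diff_infinite_finite)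
  then obtain y0 where y0: "y0 \<in> {x\<in>\<Omega>. \<phi> x = w} - {z\<in>\<Omega>. \<psi> z = 0}"
    using infinite_imp_nonempty by blast
  have y0': "y0 \<in> \<Omega>" "\<phi> y0 = w" "\<psi> y0 \<noteq> 0" using y0 by auto
  have inf2: "infinite ({x\<in>\<Omega>. \<phi> x = w} - {y0})" using inf by simp
  show False
  proof (rule lemmaB[OF hbs cp bpe fr _ inf2, where y="\<lambda>_. y0" and \<alpha>="\<lambda>_. \<psi> y0" and \<beta>=\<psi>])
    show "{x\<in>\<Omega>. \<phi> x = w} - {y0} \<subseteq> \<Omega>" by blast
    show "\<forall>x\<in>{x\<in>\<Omega>. \<phi> x = w} - {y0}. y0 \<in> \<Omega>" using y0' by blast
    show "\<forall>x\<in>{x\<in>\<Omega>. \<phi> x = w} - {y0}. \<psi> y0 \<noteq> 0" using y0' by blast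
    show "\<forall>x\<in>{x\<in>\<Omega>. \<phi> x = w} - {y0}. \<psi> x = 0 \<or> y0 \<notin> {x\<in>\<Omega>. \<phi> x = w} - {y0}" by blast
    show "\<forall>x\<in>{x\<in>\<Omega>. \<phi> x = w} - {y0}. \<forall>f\<in>B. \<psi> y0 * mult_op \<Omega> \<psi> (comp_op \<Omega> \<phi> f) x = \<psi> x * mult_op \<Omega> \<psi> (comp_op \<Omega> \<phi> f) y0"
      using y0' by (simp add: mult_op_def comp_op_def)
  qed
qed

lemma lemmaC:
  assumes hbs: "hol_banach_space \<Omega> B N" and cp: "contains_polynomials \<Omega> B"
    and bpe: "bounded_point_evaluations \<Omega> B N"
    and fr: "fredholm B N (\<lambda>f. mult_op \<Omega> \<psi> (comp_op \<Omega> \<phi> f))"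
    and V: "infinite V" "\<forall>w\<in>V. \<exists>x y. x\<in>\<Omega> \<and> y\<in>\<Omega> \<and> x \<noteq> y \<and> \<phi> x = w \<and> \<phi> y = w"
  shows False
proof -
  have zf: "finite {z\<in>\<Omega>. \<psi> z = 0}" by (rule zeros_finite[OF hbs cp bpe fr])
  from bchoice[OF V(2)] obtain xw where "\<forall>w\<in>V. \<exists>y. xw w\<in>\<Omega> \<and> y\<in>\<Omega> \<and> xw w \<noteq> y \<and> \<phi> (xw w) = w \<and> \<phi> y = w"
    by blast
  from bchoice[OF this] obtain yw where
    xy: "\<forall>w\<in>V. xw w\<in>\<Omega> \<and> yw w\<in>\<Omega> \<and> xw w \<noteq> yw w \<and> \<phi> (xw w) = w \<and> \<phi> (yw w) = w"
    by blast
  define V' where "V' = {w\<in>V. \<psi> (yw w) \<noteq> 0}"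
  have "inj_on yw (V - V')" by (rule inj_onI) (metis DiffD1 xy)
  moreover have "yw ` (V - V') \<subseteq> {z\<in>\<Omega>. \<psi> z = 0}" using xy by (auto simp: V'_def)
  ultimately have "finite (V - V')" using zf by (meson finite_imageD finite_subset)
  then have infV': "infinite V'" using V(1)
    by (metis Diff_infinite_finite Diff_Diff_Int V'_def inf.absorb_iff2 mem_Collect_eq subsetI)
  have injx: "inj_on xw V'" by (rule inj_onI) (metis V'_def mem_Collect_eq xy)
  define X where "X = xw ` V'"
  have infX: "infinite X" unfolding X_def using infV' injx finite_imageD by blast
  define y where "y = (\<lambda>x. yw (\<phi> x))"
  have px: "\<And>w. w \<in> V' \<Longrightarrow> \<phi> (xw w) = w \<and> xw w \<in> \<Omega> \<and> yw w \<in> \<Omega> \<and> xw w \<noteq> yw w \<and> \<phi> (yw w) = w \<and> \<psi> (yw w) \<noteq> 0"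
    using xy unfolding V'_def by auto
  show False
  proof (rule lemmaB[OF hbs cp bpe fr _ infX, where y=y and \<alpha>="\<lambda>x. \<psi> (y x)" and \<beta>=\<psi>])
    show "X \<subseteq> \<Omega>" using px by (auto simp: X_def)
    show "\<forall>x\<in>X. y x \<in> \<Omega>" using px by (auto simp: X_def y_def)
    show "\<forall>x\<in>X. \<psi> (y x) \<noteq> 0" using px by (auto simp: X_def y_def)
    show "\<forall>x\<in>X. \<psi> x = 0 \<or> y x \<notin> X"
    proof
      fix x assume "x \<in> X"
      then obtain w where w: "w \<in> V'" "x = xw w" by (auto simp: X_def)
      have "yw w \<notin> X"
      proof
        assume "yw w \<in> X"
        then obtain w' where w': "w' \<in> V'" "yw w = xw w'" by (auto simp: X_def)
        then have "w = w'" using px[OF w(1)] px[OF w'(1)] by metis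
        then show False using w' px[OF w(1)] by simp
      qed
      then show "\<psi> x = 0 \<or> y x \<notin> X" using px[OF w(1)] w by (simp add: y_def)
    qed
    show "\<forall>x\<in>X. \<forall>f\<in>B. \<psi> (y x) * mult_op \<Omega> \<psi> (comp_op \<Omega> \<phi> f) x = \<psi> x * mult_op \<Omega> \<psi> (comp_op \<Omega> \<phi> f) (y x)"
    proof (intro ballI)
      fix x f assume "x \<in> X" "f \<in> B"
      then obtain w where w: "w \<in> V'" "x = xw w" by (auto simp: X_def)
      show "\<psi> (y x) * mult_op \<Omega> \<psi> (comp_op \<Omega> \<phi> f) x = \<psi> x * mult_op \<Omega> \<psi> (comp_op \<Omega> \<phi> f) (y x)"
        using px[OF w(1)] w by (simp add: y_def mult_op_def comp_op_def)
    qed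
  qed
qed


lemma hol_self_cont:
  assumes "hol_self_map \<Omega> \<phi>"
  shows "continuous_on \<Omega> \<phi>"
proof -
  have "continuous_on \<Omega> (\<lambda>z. \<chi> i. \<phi> z $ i)"
    using assms unfolding hol_self_map_def by (intro continuous_on_vec_lambda hol_cont) blast
  then show ?thesis by simp
qed

lemma locinj:
  assumes hbs: "hol_banach_space \<Omega> B N" and cp: "contains_polynomials \<Omega> B"
    and bpe: "bounded_point_evaluations \<Omega> B N"
    and fr: "fredholm B N (\<lambda>f. mult_op \<Omega> \<psi> (comp_op \<Omega> \<phi> f))"
    and op: "open \<Omega>" and c: "c \<in> \<Omega>"
  shows "\<exists>r>0. ball c r \<subseteq> \<Omega> \<and> inj_on \<phi> (ball c r)"
proof (rule ccontr)
  assume H: "\<not> (\<exists>r>0. ball c r \<subseteq> \<Omega> \<and> inj_on \<phi> (ball c r))"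
  define V where "V = {w. \<exists>x y. x\<in>\<Omega> \<and> y\<in>\<Omega> \<and> x \<noteq> y \<and> \<phi> x = w \<and> \<phi> y = w}"
  have fV: "finite V"
  proof (rule ccontr)
    assume "infinite V"
    moreover have "\<forall>w\<in>V. \<exists>x y. x\<in>\<Omega> \<and> y\<in>\<Omega> \<and> x \<noteq> y \<and> \<phi> x = w \<and> \<phi> y = w"
      unfolding V_def by blast
    ultimately show False by (rule lemmaC[OF hbs cp bpe fr])
  qed
  define P where "P = {x\<in>\<Omega>. \<phi> x \<in> V}"
  have "P = (\<Union>w\<in>V. {x\<in>\<Omega>. \<phi> x = w})" unfolding P_def by blast
  then have fP: "finite P" using fV fiber_finite[OF hbs cp bpe fr] by simp
  obtain r0 where r0: "r0 > 0" "ball c r0 \<subseteq> \<Omega>" using op c open_contains_ball by blast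
  define D where "D = insert r0 ((\<lambda>p. dist c p) ` (P - {c}))"
  have fD: "finite D" using fP by (simp add: D_def)
  define \<epsilon> where "\<epsilon> = Min D"
  have eps_pos: "\<epsilon> > 0" unfolding \<epsilon>_def using fD r0 by (subst Min_gr_iff) (auto simp: D_def)
  have eps_le: "\<epsilon> \<le> d" if "d \<in> D" for d unfolding \<epsilon>_def using fD that by simp
  have "\<epsilon> \<le> r0" by (rule eps_le) (simp add: D_def)
  then have "ball c \<epsilon> \<subseteq> ball c r0" by (rule subset_ball)
  then have "ball c \<epsilon> \<subseteq> \<Omega>" using r0(2) by (rule subset_trans)
  then have "\<not> inj_on \<phi> (ball c \<epsilon>)" using H eps_pos by auto
  then obtain x x' where xx: "x \<in> ball c \<epsilon>" "x' \<in> ball c \<epsilon>" "x \<noteq> x'" "\<phi> x = \<phi> x'"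
    unfolding inj_on_def by auto
  have inO: "x \<in> \<Omega>" "x' \<in> \<Omega>" using xx(1,2) \<open>ball c \<epsilon> \<subseteq> \<Omega>\<close> by (meson subsetD)+
  have "\<exists>x1 y1. x1\<in>\<Omega> \<and> y1\<in>\<Omega> \<and> x1 \<noteq> y1 \<and> \<phi> x1 = \<phi> x \<and> \<phi> y1 = \<phi> x"
    using inO xx(3,4) by metis
  then have "\<phi> x \<in> V" unfolding V_def by simp
  then have inP: "x \<in> P" "x' \<in> P" using inO xx(4) unfolding P_def by auto
  obtain p where p: "p = x \<or> p = x'" "p \<noteq> c"
  proof (cases "x = c")
    case True then show ?thesis using that[of x'] xx(3) by simp
  next
    case False then show ?thesis using that[of x] by simp
  qed
  have pP: "p \<in> P - {c}" using p inP by blast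
  have "dist c p \<in> D" unfolding D_def using pP by blast
  then have "\<epsilon> \<le> dist c p" by (rule eps_le)
  moreover have "p \<in> ball c \<epsilon>" using p xx(1,2) by blast
  then have "dist c p < \<epsilon>" by simp
  ultimately show False by simp
qed

lemma inj_part:
  assumes hbs: "hol_banach_space \<Omega> B N" and cp: "contains_polynomials \<Omega> B"
    and bpe: "bounded_point_evaluations \<Omega> B N"
    and fr: "fredholm B N (\<lambda>f. mult_op \<Omega> \<psi> (comp_op \<Omega> \<phi> f))"
    and op: "open \<Omega>" and hs: "hol_self_map \<Omega> \<phi>"
  shows "inj_on \<phi> \<Omega>"
proof (rule inj_onI, rule ccontr)
  fix a b assume ab: "a \<in> \<Omega>" "b \<in> \<Omega>" "\<phi> a = \<phi> b" "a \<noteq> b"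
  obtain ra where ra: "ra > 0" "ball a ra \<subseteq> \<Omega>" "inj_on \<phi> (ball a ra)"
    using locinj[OF hbs cp bpe fr op ab(1)] by blast
  obtain rb where rb: "rb > 0" "ball b rb \<subseteq> \<Omega>" "inj_on \<phi> (ball b rb)"
    using locinj[OF hbs cp bpe fr op ab(2)] by blast
  have "dist a b > 0" using ab(4) by simp
  define r where "r = min (min ra rb) (dist a b / 2)"
  have r: "r > 0" "r \<le> ra" "r \<le> rb" "2 * r \<le> dist a b" using ra(1) rb(1) \<open>dist a b > 0\<close> unfolding r_def by auto
  have sa: "ball a r \<subseteq> ball a ra" by (rule subset_ball[OF r(2)])
  have sb: "ball b r \<subseteq> ball b rb" by (rule subset_ball[OF r(3)])
  have Ua: "ball a r \<subseteq> \<Omega>" "inj_on \<phi> (ball a r)"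
    using subset_trans[OF sa ra(2)] inj_on_subset[OF ra(3) sa] by auto
  have Ub: "ball b r \<subseteq> \<Omega>" "inj_on \<phi> (ball b r)"
    using subset_trans[OF sb rb(2)] inj_on_subset[OF rb(3) sb] by auto
  have disj: "x \<noteq> y" if "x \<in> ball a r" "y \<in> ball b r" for x y
  proof
    assume "x = y"
    then have "dist a y < r" "dist y b < r" using that by (auto simp: dist_commute)
    then have "dist a b < 2 * r" using dist_triangle[of a b y] by linarith
    then show False using r by simp
  qed
  have cont: "continuous_on \<Omega> \<phi>" by (rule hol_self_cont[OF hs])
  have oa: "open (\<phi> ` ball a r)"
    by (rule invariance_of_domain[OF continuous_on_subset[OF cont Ua(1)] open_ball Ua(2)])
  have ob: "open (\<phi> ` ball b r)"
    by (rule invariance_of_domain[OF continuous_on_subset[OF cont Ub(1)] open_ball Ub(2)])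
  define W where "W = \<phi> ` ball a r \<inter> \<phi> ` ball b r"
  have "a \<in> ball a r" "b \<in> ball b r" using r(1) by simp_all
  then have "\<phi> a \<in> \<phi> ` ball a r" "\<phi> b \<in> \<phi> ` ball b r" by auto
  then have "\<phi> a \<in> W" unfolding W_def using ab(3) by simp
  moreover have "open W" unfolding W_def using oa ob by blast
  ultimately have "infinite W" using finite_imp_not_open by blast
  moreover have "\<forall>w\<in>W. \<exists>x y. x\<in>\<Omega> \<and> y\<in>\<Omega> \<and> x \<noteq> y \<and> \<phi> x = w \<and> \<phi> y = w"
  proof
    fix w assume "w \<in> W"
    then have "w \<in> \<phi> ` ball a r" "w \<in> \<phi> ` ball b r" unfolding W_def by auto
    then obtain x y where "x \<in> ball a r" "y \<in> ball b r" "\<phi> x = w" "\<phi> y = w"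
      by (metis imageE)
    then show "\<exists>x y. x\<in>\<Omega> \<and> y\<in>\<Omega> \<and> x \<noteq> y \<and> \<phi> x = w \<and> \<phi> y = w"
      using Ua Ub disj by blast
  qed
  ultimately show False by (rule lemmaC[OF hbs cp bpe fr])
qed

theorem lemma5p2:
  fixes \<Omega> :: "(complex^'n) set"
    and B :: "(complex^'n \<Rightarrow> complex) set"
    and N :: "(complex^'n \<Rightarrow> complex) \<Rightarrow> real"
    and \<psi> :: "complex^'n \<Rightarrow> complex"
    and \<phi> :: "complex^'n \<Rightarrow> complex^'n"
  assumes "open \<Omega>" and "connected \<Omega>" and "bounded \<Omega>"
    and "hol_banach_space \<Omega> B N"
    and "contains_polynomials \<Omega> B"
    and "bounded_point_evaluations \<Omega> B N"
    and "\<psi> \<in> B"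
    and "hol_self_map \<Omega> \<phi>"
    and "bounded_op B N (mult_op \<Omega> \<psi>)"
    and "bounded_op B N (comp_op \<Omega> \<phi>)"
    and "fredholm B N (\<lambda>f. mult_op \<Omega> \<psi> (comp_op \<Omega> \<phi> f))"
  shows "(CARD('n) = 1 \<longrightarrow> finite {z\<in>\<Omega>. \<psi> z = 0}) \<and>
         (CARD('n) > 1 \<longrightarrow> (\<forall>z\<in>\<Omega>. \<psi> z \<noteq> 0)) \<and>
         inj_on \<phi> \<Omega>"
proof -
  have zf: "finite {z\<in>\<Omega>. \<psi> z = 0}" by (rule zeros_finite[OF assms(4,5,6,11)])
  have hol: "hol_on \<Omega> \<psi>" using hbs_facts(5)[OF assms(4,7)] .
  have "\<forall>z\<in>\<Omega>. \<psi> z \<noteq> 0" if "CARD('n) > 1"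
  proof (intro ballI notI)
    fix z assume "z \<in> \<Omega>" "\<psi> z = 0"
    then have "infinite {z\<in>\<Omega>. \<psi> z = 0}" using no_isolated_zero[OF that assms(1) hol] by blast
    then show False using zf by simp
  qed
  moreover have "inj_on \<phi> \<Omega>" by (rule inj_part[OF assms(4,5,6,11,1,8)])
  ultimately show ?thesis using zf by blast
qed

end
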